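(* Let $X$ be a Banach space, $C\subset X$ a nonempty generalized polyhedral convex set, and $f:X\to\mathbb R$ twice continuously Fréchet differentiable on $X$. If $\bar x$ is a local minimum of $\min\{f(x)\mid x\in C\}$, then: (c0) $\langle\nabla f(\bar x),v\rangle\ge0$ for all $v\in T_C(\bar x)$; (c1) for every $v\in T_C(\bar x)$ with $\langle\nabla f(\bar x),v\rangle=0$, one has $\langle\nabla f(\bar x),w\rangle\ge0$ for all $w\in T^2_C(\bar x,v)$; (c2) $\langle\nabla^2 f(\bar x)v,v\rangle\ge0$ for all $v\in T_C(\bar x)$ with $\langle\nabla f(\bar x),v\rangle=0$. *)

theory Defs
  imports "HOL-Analysis.Analysis"
begin

definition gen_polyhedral :: "'a::real_normed_vector set \<Rightarrow> bool" where
  "gen_polyhedral C \<longleftrightarrow>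
     (\<exists>(L::'a set) (m::nat) (g::nat \<Rightarrow> ('a \<Rightarrow>\<^sub>L real)) (\<alpha>::nat \<Rightarrow> real).
        affine L \<and> closed L \<and> L \<noteq> {} \<and>
        C = {x \<in> L. \<forall>i<m. blinfun_apply (g i) x \<le> \<alpha> i})"

definition tangent_cone :: "'a::real_normed_vector set \<Rightarrow> 'a \<Rightarrow> 'a set" where
  "tangent_cone C x = {v. \<exists>(t::nat \<Rightarrow> real) (vs::nat \<Rightarrow> 'a).
      (\<forall>n. t n > 0) \<and> t \<longlonglongrightarrow> 0 \<and> vs \<longlonglongrightarrow> v \<and>
      (\<forall>n. x + t n *\<^sub>R vs n \<in> C)}"

definition second_order_tangent_set :: "'a::real_normed_vector set \<Rightarrow> 'a \<Rightarrow> 'a \<Rightarrow> 'a set" where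
  "second_order_tangent_set C x v = {w. \<exists>(t::nat \<Rightarrow> real) (ws::nat \<Rightarrow> 'a).
      (\<forall>n. t n > 0) \<and> t \<longlonglongrightarrow> 0 \<and> ws \<longlonglongrightarrow> w \<and>
      (\<forall>n. x + t n *\<^sub>R v + ((t n)\<^sup>2 / 2) *\<^sub>R ws n \<in> C)}"

definition local_min_on :: "('a::metric_space \<Rightarrow> real) \<Rightarrow> 'a set \<Rightarrow> 'a \<Rightarrow> bool" where
  "local_min_on f C x \<longleftrightarrow> x \<in> C \<and>
     (\<exists>\<epsilon>>0. \<forall>y\<in>C. dist y x < \<epsilon> \<longrightarrow> f x \<le> f y)"

end

theory Submission
  imports Defs
begin

lemma first_order_seq:
  fixes f :: "'a::real_normed_vector \<Rightarrow> real"
  assumes der: "(f has_derivative D) (at x)" and tpos: "\<forall>n. t n > 0"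
    and t0: "t \<longlonglongrightarrow> 0" and vsv: "vs \<longlonglongrightarrow> v"
    and ev: "eventually (\<lambda>n. f x \<le> f (x + t n *\<^sub>R vs n)) sequentially"
  shows "D v \<ge> 0"
proof (rule ccontr)
  assume neg: "\<not> D v \<ge> 0"
  hence Dv: "D v < 0" by simp
  have bl: "bounded_linear D" and
    alt: "\<forall>e>0. \<exists>d>0. \<forall>y. norm(y - x) < d \<longrightarrow> norm (f y - f x - D(y - x)) \<le> e * norm (y - x)"
    using der unfolding has_derivative_at_alt by auto
  have "Bseq vs" using vsv by (intro convergent_imp_Bseq convergentI)
  then obtain M where M: "M > 0" "\<And>n. norm (vs n) \<le> M" unfolding Bseq_def by auto
  have "(\<lambda>n. D (vs n)) \<longlonglongrightarrow> D v" using bounded_linear.tendsto[OF bl vsv] .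
  hence ev1: "eventually (\<lambda>n. D (vs n) < D v / 2) sequentially"
    using Dv by (intro order_tendstoD(2)) auto
  define e where "e = - D v / (4 * M)"
  have e: "e > 0" using Dv M by (simp add: e_def divide_neg_pos)
  obtain d where d: "d > 0" "\<And>y. norm(y - x) < d \<Longrightarrow> norm (f y - f x - D(y - x)) \<le> e * norm (y - x)"
    using alt e by blast
  have ev2: "eventually (\<lambda>n. t n < d / M) sequentially"
    using t0 d M by (intro order_tendstoD(2)) auto
  from eventually_conj[OF ev eventually_conj[OF ev1 ev2]]
  obtain n where n: "f x \<le> f (x + t n *\<^sub>R vs n)" "D (vs n) < D v / 2" "t n < d / M"
    using eventually_sequentially by auto
  define h where "h = t n *\<^sub>R vs n"
  have nh: "norm h \<le> t n * M" using M tpos by (simp add: h_def mult_left_mono less_imp_le)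
  have "t n * M < d" using n(3) M by (simp add: pos_less_divide_eq)
  hence "norm h < d" using nh by linarith
  hence "norm (f (x + h) - f x - D h) \<le> e * norm h" using d(2)[of "x + h"] by simp
  hence "f (x + h) - f x \<le> D h + e * norm h" by (simp add: abs_le_iff)
  also have "D h = t n * D (vs n)" unfolding h_def using linear_scale[OF bounded_linear.linear[OF bl]] by simp
  also have "e * norm h \<le> e * (t n * M)" using e nh by (simp add: mult_left_mono)
  also have "e * (t n * M) = - t n * D v / 4" using M by (simp add: e_def)
  finally have "f (x + h) - f x \<le> t n * D (vs n) - t n * D v / 4" by simp
  also have "\<dots> < t n * (D v / 2) - t n * D v / 4" using tpos n(2) by simp
  also have "\<dots> = t n * D v / 4" by simp
  also have "\<dots> < 0" using tpos Dv by (simp add: mult_pos_neg)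
  finally show False using n(1) h_def by simp
qed


lemma direction_feasible:
  fixes L :: "'a::real_normed_vector set" and g :: "nat \<Rightarrow> ('a \<Rightarrow>\<^sub>L real)"
  assumes aff: "affine L" and cl: "closed L"
    and Ceq: "C = {x \<in> L. \<forall>i<m. blinfun_apply (g i) x \<le> \<alpha> i}"
    and xbC: "xb \<in> C" and vT: "v \<in> tangent_cone C xb"
  shows "\<exists>\<delta>>0. xb + \<delta> *\<^sub>R v \<in> C"
proof -
  obtain t vs where tpos: "\<forall>n. t n > 0" and t0: "t \<longlonglongrightarrow> 0" and vsv: "vs \<longlonglongrightarrow> v"
    and inC: "\<forall>n. xb + t n *\<^sub>R vs n \<in> C"
    using vT unfolding tangent_cone_def by blast
  have xbL: "xb \<in> L" using xbC Ceq by auto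
  have lineL: "xb + a *\<^sub>R v \<in> L" for a
  proof -
    have "xb + a *\<^sub>R vs n \<in> L" for n
    proof -
      have p: "xb + t n *\<^sub>R vs n \<in> L" using inC Ceq by auto
      have "(1 - a / t n) *\<^sub>R xb + (a / t n) *\<^sub>R (xb + t n *\<^sub>R vs n) \<in> L"
        using aff xbL p unfolding affine_def by auto
      also have "(1 - a / t n) *\<^sub>R xb + (a / t n) *\<^sub>R (xb + t n *\<^sub>R vs n) = xb + a *\<^sub>R vs n"
        using tpos[rule_format, of n] by (simp add: algebra_simps)
      finally show ?thesis .
    qed
    moreover have "(\<lambda>n. xb + a *\<^sub>R vs n) \<longlonglongrightarrow> xb + a *\<^sub>R v"
      by (intro tendsto_intros vsv)
    ultimately show ?thesis using closed_sequentially[OF cl, of "\<lambda>n. xb + a *\<^sub>R vs n"] by blast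
  qed
  have active: "g i v \<le> 0" if "i < m" "g i xb = \<alpha> i" for i
  proof -
    have "g i (vs n) \<le> 0" for n
    proof -
      have "g i (xb + t n *\<^sub>R vs n) \<le> \<alpha> i" using inC that(1) Ceq by auto
      hence "t n * g i (vs n) \<le> 0" using that(2) by (simp add: blinfun.add_right blinfun.scaleR_right)
      thus ?thesis using tpos[rule_format, of n] by (simp add: mult_le_0_iff)
    qed
    moreover have "(\<lambda>n. g i (vs n)) \<longlonglongrightarrow> g i v"
      by (intro bounded_linear.tendsto[OF blinfun.bounded_linear_right] vsv)
    ultimately show ?thesis by (intro LIMSEQ_le_const2) auto
  qed
  have evi: "\<forall>i\<in>{..<m}. eventually (\<lambda>\<delta>. g i (xb + \<delta> *\<^sub>R v) \<le> \<alpha> i) (at_right (0::real))"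
  proof
    fix i assume i: "i \<in> {..<m}"
    have xbi: "g i xb \<le> \<alpha> i" using xbC Ceq i by auto
    have eq: "g i (xb + \<delta> *\<^sub>R v) = g i xb + \<delta> * g i v" for \<delta>
      by (simp add: blinfun.add_right blinfun.scaleR_right)
    show "eventually (\<lambda>\<delta>. g i (xb + \<delta> *\<^sub>R v) \<le> \<alpha> i) (at_right (0::real))"
    proof (cases "g i v \<le> 0")
      case True
      show ?thesis using eventually_at_right_less[of "0::real"]
      proof (rule eventually_mono)
        fix \<delta> :: real assume "0 < \<delta>"
        hence "\<delta> * g i v \<le> 0" using True by (simp add: mult_nonneg_nonpos)
        thus "g i (xb + \<delta> *\<^sub>R v) \<le> \<alpha> i" using eq xbi by simp
      qed
    next
      case False
      hence lt: "g i xb < \<alpha> i" using active[of i] i xbi by force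
      have "((\<lambda>\<delta>. g i xb + \<delta> * g i v) \<longlongrightarrow> g i xb + 0 * g i v) (at_right (0::real))"
        by (intro tendsto_intros)
      hence "eventually (\<lambda>\<delta>. g i xb + \<delta> * g i v < \<alpha> i) (at_right (0::real))"
        using lt by (intro order_tendstoD(2)) auto
      thus ?thesis by eventually_elim (simp add: eq)
    qed
  qed
  have "eventually (\<lambda>\<delta>. \<delta> > 0 \<and> (\<forall>i\<in>{..<m}. g i (xb + \<delta> *\<^sub>R v) \<le> \<alpha> i)) (at_right (0::real))"
    using eventually_conj[OF eventually_at_right_less eventually_ball_finite[OF _ evi]] by simp
  then obtain \<delta> :: real where "\<delta> > 0" "\<forall>i\<in>{..<m}. g i (xb + \<delta> *\<^sub>R v) \<le> \<alpha> i"
    using eventually_happens[of _ "at_right (0::real)"] trivial_limit_at_right_real by blast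
  thus ?thesis using lineL Ceq by auto
qed

theorem theorem3p3:
  fixes f :: "'a::banach \<Rightarrow> real"
    and Df :: "'a \<Rightarrow> ('a \<Rightarrow>\<^sub>L real)"
    and D2f :: "'a \<Rightarrow> ('a \<Rightarrow>\<^sub>L ('a \<Rightarrow>\<^sub>L real))"
    and C :: "'a set" and xb :: 'a
  assumes "C \<noteq> {}" and "gen_polyhedral C"
    and "\<And>x. (f has_derivative blinfun_apply (Df x)) (at x)"
    and "\<And>x. (Df has_derivative blinfun_apply (D2f x)) (at x)"
    and "continuous_on UNIV D2f"
    and "local_min_on f C xb"
  shows "(\<forall>v\<in>tangent_cone C xb. Df xb v \<ge> 0)
     \<and> (\<forall>v\<in>tangent_cone C xb. Df xb v = 0 \<longrightarrow>
           (\<forall>w\<in>second_order_tangent_set C xb v. Df xb w \<ge> 0))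
     \<and> (\<forall>v\<in>tangent_cone C xb. Df xb v = 0 \<longrightarrow> D2f xb v v \<ge> 0)"
proof -
  note fder = assms(3) and dfder = assms(4)
  obtain L m g \<alpha> where aff: "affine L" and cl: "closed L"
    and Ceq: "C = {x \<in> L. \<forall>i<(m::nat). blinfun_apply ((g::nat \<Rightarrow> ('a \<Rightarrow>\<^sub>L real)) i) x \<le> (\<alpha>::nat\<Rightarrow>real) i}"
    using assms(2) unfolding gen_polyhedral_def by blast
  have xbC: "xb \<in> C" and "\<exists>\<epsilon>>0. \<forall>y\<in>C. dist y xb < \<epsilon> \<longrightarrow> f xb \<le> f y"
    using assms(6) unfolding local_min_on_def by auto
  then obtain \<epsilon> where eps: "\<epsilon> > 0" and loc: "\<And>y. y \<in> C \<Longrightarrow> dist y xb < \<epsilon> \<Longrightarrow> f xb \<le> f y"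
    by blast
  have conv: "x + s *\<^sub>R (y - x) \<in> C" if "x \<in> C" "y \<in> C" "0 \<le> s" "s \<le> 1" for x y s
  proof -
    have eq: "x + s *\<^sub>R (y - x) = (1 - s) *\<^sub>R x + s *\<^sub>R y" by (simp add: algebra_simps)
    have "(1 - s) *\<^sub>R x + s *\<^sub>R y \<in> L" using aff that Ceq unfolding affine_def by auto
    moreover have "g i ((1 - s) *\<^sub>R x + s *\<^sub>R y) \<le> \<alpha> i" if i: "i < m" for i
    proof -
      have "g i x \<le> \<alpha> i" "g i y \<le> \<alpha> i" using \<open>x \<in> C\<close> \<open>y \<in> C\<close> Ceq i by auto
      hence "(1 - s) * g i x + s * g i y \<le> (1 - s) * \<alpha> i + s * \<alpha> i"
        using \<open>0 \<le> s\<close> \<open>s \<le> 1\<close> by (intro add_mono mult_left_mono) auto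
      moreover have "g i ((1 - s) *\<^sub>R x + s *\<^sub>R y) = (1 - s) * g i x + s * g i y"
        by (simp add: blinfun.add_right blinfun.scaleR_right)
      moreover have "(1 - s) * \<alpha> i + s * \<alpha> i = \<alpha> i" by (simp add: algebra_simps)
      ultimately show ?thesis by linarith
    qed
    ultimately show ?thesis using eq Ceq by auto
  qed
  have near: "eventually (\<lambda>n. f xb \<le> f (y n)) sequentially"
    if "y \<longlonglongrightarrow> xb" "\<And>n. y n \<in> C" for y
  proof -
    have "eventually (\<lambda>n. dist (y n) xb < \<epsilon>) sequentially"
      using that(1) eps by (simp add: tendsto_iff)
    thus ?thesis by eventually_elim (use loc that(2) in auto)
  qed
  have seqlim: "(\<lambda>n. xb + t n *\<^sub>R vs n) \<longlonglongrightarrow> xb" if "t \<longlonglongrightarrow> 0" "vs \<longlonglongrightarrow> v"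
    for t :: "nat \<Rightarrow> real" and vs v
  proof -
    have "(\<lambda>n. xb + t n *\<^sub>R vs n) \<longlonglongrightarrow> xb + 0 *\<^sub>R v" by (intro tendsto_intros that)
    thus ?thesis by simp
  qed
  have c0: "Df xb v \<ge> 0" if vT0: "v \<in> tangent_cone C xb" for v
  proof -
    obtain t vs where tpos: "\<forall>n. t n > 0" and t0: "t \<longlonglongrightarrow> 0" and vsv: "vs \<longlonglongrightarrow> v"
      and inC: "\<forall>n. xb + t n *\<^sub>R vs n \<in> C"
      using vT0 unfolding tangent_cone_def by blast
    show ?thesis
      by (rule first_order_seq[OF fder tpos t0 vsv near[OF seqlim[OF t0 vsv]]]) (use inC in auto)
  qed
  have feas: "Df xb u \<ge> 0" if "xb + u \<in> C" for u
  proof -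
    define t where "t = (\<lambda>n::nat. 1 / (real n + 1))"
    have "u \<in> tangent_cone C xb" unfolding tangent_cone_def
    proof (intro CollectI exI conjI allI)
      show "t n > 0" for n by (simp add: t_def)
      show "t \<longlonglongrightarrow> 0" unfolding t_def using LIMSEQ_inverse_real_of_nat by (simp add: inverse_eq_divide add.commute)
      show "(\<lambda>n. u) \<longlonglongrightarrow> u" by simp
      show "xb + t n *\<^sub>R u \<in> C" for n
        using conv[OF xbC that, of "t n"] by (simp add: t_def)
    qed
    thus ?thesis by (rule c0)
  qed
  have c1: "Df xb w \<ge> 0" if Dv1: "Df xb v = 0" and wT: "w \<in> second_order_tangent_set C xb v" for v w
  proof -
    obtain t ws where tpos: "\<forall>n. t n > 0" and wsw: "ws \<longlonglongrightarrow> w"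
      and inC: "\<forall>n. xb + t n *\<^sub>R v + ((t n)\<^sup>2 / 2) *\<^sub>R ws n \<in> C"
      using wT unfolding second_order_tangent_set_def by blast
    have "Df xb (ws n) \<ge> 0" for n
    proof -
      have "Df xb (t n *\<^sub>R v + ((t n)\<^sup>2 / 2) *\<^sub>R ws n) \<ge> 0"
        by (rule feas) (use inC in \<open>simp add: add.assoc\<close>)
      hence "((t n)\<^sup>2 / 2) * Df xb (ws n) \<ge> 0"
        using Dv1 by (simp add: blinfun.add_right blinfun.scaleR_right)
      moreover have "(t n)\<^sup>2 / 2 > 0" using tpos[rule_format, of n] by simp
      ultimately show ?thesis by (simp add: zero_le_mult_iff)
    qed
    moreover have "(\<lambda>n. Df xb (ws n)) \<longlonglongrightarrow> Df xb w"
      by (intro bounded_linear.tendsto[OF blinfun.bounded_linear_right] wsw)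
    ultimately show ?thesis by (intro LIMSEQ_le_const) auto
  qed
  have c2: "D2f xb v v \<ge> 0" if vT: "v \<in> tangent_cone C xb" and Dv: "Df xb v = 0" for v
  proof (rule ccontr)
    assume "\<not> D2f xb v v \<ge> 0"
    hence neg: "D2f xb v v < 0" by simp
    obtain \<delta> where dpos: "\<delta> > 0" and dC: "xb + \<delta> *\<^sub>R v \<in> C"
      using direction_feasible[OF aff cl Ceq xbC vT] by blast
    define \<phi> where "\<phi> = (\<lambda>s::real. f (xb + s *\<^sub>R v))"
    define \<psi> where "\<psi> = (\<lambda>s::real. Df (xb + s *\<^sub>R v) v)"
    have phider: "(\<phi> has_real_derivative \<psi> s) (at s)" for s
    proof -
      have "((\<lambda>s. xb + s *\<^sub>R v) has_derivative (\<lambda>s. s *\<^sub>R v)) (at s)"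
        by (auto intro!: derivative_eq_intros)
      from has_derivative_compose[OF this fder]
      have "(\<phi> has_derivative (\<lambda>h. Df (xb + s *\<^sub>R v) (h *\<^sub>R v))) (at s)"
        unfolding \<phi>_def .
      moreover have "(\<lambda>h. Df (xb + s *\<^sub>R v) (h *\<^sub>R v)) = (*) (\<psi> s)"
        by (auto simp: \<psi>_def blinfun.scaleR_right)
      ultimately show ?thesis by (simp add: has_field_derivative_def)
    qed
    have psider: "(\<psi> has_real_derivative D2f xb v v) (at 0)"
    proof -
      have "((\<lambda>s. xb + s *\<^sub>R v) has_derivative (\<lambda>s. s *\<^sub>R v)) (at 0)"
        by (auto intro!: derivative_eq_intros)
      from has_derivative_compose[OF this dfder]
      have h1: "((\<lambda>s. Df (xb + s *\<^sub>R v)) has_derivative (\<lambda>h. D2f xb (h *\<^sub>R v))) (at 0)"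
        by simp
      have "(\<psi> has_derivative (\<lambda>h. D2f xb (h *\<^sub>R v) v)) (at 0)"
        unfolding \<psi>_def
        using blinfun.FDERIV[OF h1 has_derivative_const[of v]] by simp
      moreover have "(\<lambda>h. D2f xb (h *\<^sub>R v) v) = (*) (D2f xb v v)"
        by (auto simp: blinfun.scaleR_right blinfun.scaleR_left)
      ultimately show ?thesis by (simp add: has_field_derivative_def)
    qed
    obtain d where d: "d > 0" "\<And>h. h > 0 \<Longrightarrow> h < d \<Longrightarrow> \<psi> (0 + h) < \<psi> 0"
      using DERIV_neg_dec_right[OF psider neg] by blast
    have psi0: "\<psi> 0 = 0" using Dv by (simp add: \<psi>_def)
    define h where "h = min \<delta> (min (d / 2) (\<epsilon> / (2 * (norm v + 1))))"
    have "\<epsilon> / (2 * (norm v + 1)) > 0" using eps by (intro divide_pos_pos) (auto intro: add_nonneg_pos)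
    hence hpos: "h > 0" using dpos d by (simp add: h_def)
    have hd: "h < d" using d hpos by (simp add: h_def)
    have hdel: "h \<le> \<delta>" by (simp add: h_def)
    have hC: "xb + h *\<^sub>R v \<in> C"
      using conv[OF xbC dC, of "h / \<delta>"] hpos hdel dpos by simp
    have "h * norm v \<le> \<epsilon> / (2 * (norm v + 1)) * norm v"
      by (intro mult_right_mono) (auto simp: h_def)
    also have "\<dots> < \<epsilon>"
    proof -
      have nv0: "norm v \<ge> 0" by simp
      have nv: "norm v < 2 * (norm v + 1)"
        by (smt (verit) norm_ge_zero)
      have nv2: "0 < 2 * (norm v + 1)" by (smt (verit) norm_ge_zero)
      have "\<epsilon> / (2 * (norm v + 1)) * norm v = \<epsilon> * (norm v / (2 * (norm v + 1)))" by simp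
      also have "norm v / (2 * (norm v + 1)) < 1" using nv nv2 by simp
      hence "\<epsilon> * (norm v / (2 * (norm v + 1))) < \<epsilon> * 1" using eps by (intro mult_strict_left_mono)
      finally show ?thesis by simp
    qed
    finally have "dist (xb + h *\<^sub>R v) xb < \<epsilon>" using hpos by (simp add: dist_norm)
    hence ge: "\<phi> 0 \<le> \<phi> h" using loc[OF hC] by (simp add: \<phi>_def)
    obtain z where z: "0 < z" "z < h" "\<phi> h - \<phi> 0 = (h - 0) * \<psi> z"
      using MVT2[OF hpos, of \<phi> \<psi>] phider by blast
    have "\<psi> z < 0" using d(2)[of z] z hd psi0 by simp
    hence "(h - 0) * \<psi> z < 0" using hpos by (simp add: mult_pos_neg)
    thus False using z(3) ge by simp
  qed
  show ?thesis using c0 c1 c2 by blast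
qed

end
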